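(* For $M,N\in\Lambda$ and $A\in\mathcal A$, if $A\sqsubseteq M$ and $M\to_{\mathsf v}N$ then $A\sqsubseteq N$.
   Context: $\lambda$-terms and values are $M,N::=V\mid MN$, $V::=x\mid\lambda x.M$, up to $\alpha$-conversion. Rules: $(\beta_v)$ $(\lambda x.M)V\to M\{x:=V\}$ if $V$ is a value; $(\sigma_1)$ $(\lambda x.M)NP\to(\lambda x.MP)N$ if $x\notin\mathrm{FV}(P)$; $(\sigma_3)$ $V((\lambda x.M)N)\to(\lambda x.VM)N$ if $V$ is a value and $x\notin\mathrm{FV}(V)$. $\to_{\mathsf v}$ is the contextual closure of their union. $\Lambda_\bot$ is the set of $\lambda$-terms possibly containing a constant $\bot$; $\sqsubseteq$ is the smallest context-closed preorder on $\Lambda_\bot$ with $\bot\sqsubseteq x$ and $\bot\sqsubseteq\lambda x.M$ for all variables $x$ and $M\in\Lambda_\bot$. Approximants $\mathcal A$ ($k\ge0$): $A::=B\mid C$; $B::=x\mid\lambda x.A\mid\bot\mid xBA_1\cdots A_k$; $C::=(\lambda x.A)(yBA_1\cdots A_k)$. *)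

theory Defs
  imports Main
begin

text \<open>Lambda terms with a constant Bot, in de Bruijn notation (terms are thus
  identified up to alpha-conversion). The set Lambda is the Bot-free terms.\<close>

datatype trm = Var nat | Lam trm | App trm trm | Bot

fun bot_free :: "trm \<Rightarrow> bool" where
  "bot_free (Var i) = True"
| "bot_free (Lam t) = bot_free t"
| "bot_free (App s t) = (bot_free s \<and> bot_free t)"
| "bot_free Bot = False"

fun is_value :: "trm \<Rightarrow> bool" where
  "is_value (Var i) = True"
| "is_value (Lam t) = True"
| "is_value (App s t) = False"
| "is_value Bot = False"

fun lift :: "trm \<Rightarrow> nat \<Rightarrow> trm" where
  "lift (Var i) k = (if i < k then Var i else Var (Suc i))"
| "lift (Lam t) k = Lam (lift t (Suc k))"
| "lift (App s t) k = App (lift s k) (lift t k)"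
| "lift Bot k = Bot"

fun subst :: "trm \<Rightarrow> trm \<Rightarrow> nat \<Rightarrow> trm" where
  "subst (Var i) s k = (if k < i then Var (i - 1) else if i = k then s else Var i)"
| "subst (Lam t) s k = Lam (subst t (lift s 0) (Suc k))"
| "subst (App t u) s k = App (subst t s k) (subst u s k)"
| "subst Bot s k = Bot"

text \<open>Call-by-value reduction with sigma-rules, contextually closed.
  sigma1: (\<lambda>x.M)NP \<rightarrow> (\<lambda>x.MP)N  (x not free in P is automatic via lifting);
  sigma3: V((\<lambda>x.M)N) \<rightarrow> (\<lambda>x.VM)N.\<close>

inductive red_v :: "trm \<Rightarrow> trm \<Rightarrow> bool" (infix "\<rightarrow>\<^sub>v" 50) where
  beta_v: "is_value V \<Longrightarrow> App (Lam M) V \<rightarrow>\<^sub>v subst M V 0"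
| sigma1: "App (App (Lam M) N) P \<rightarrow>\<^sub>v App (Lam (App M (lift P 0))) N"
| sigma3: "is_value V \<Longrightarrow> App V (App (Lam M) N) \<rightarrow>\<^sub>v App (Lam (App (lift V 0) M)) N"
| appL: "M \<rightarrow>\<^sub>v M' \<Longrightarrow> App M N \<rightarrow>\<^sub>v App M' N"
| appR: "N \<rightarrow>\<^sub>v N' \<Longrightarrow> App M N \<rightarrow>\<^sub>v App M N'"
| lam: "M \<rightarrow>\<^sub>v M' \<Longrightarrow> Lam M \<rightarrow>\<^sub>v Lam M'"

inductive approx_le :: "trm \<Rightarrow> trm \<Rightarrow> bool" (infix "\<sqsubseteq>" 50) where
  le_refl: "M \<sqsubseteq> M"
| le_trans: "M \<sqsubseteq> N \<Longrightarrow> N \<sqsubseteq> P \<Longrightarrow> M \<sqsubseteq> P"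
| bot_var: "Bot \<sqsubseteq> Var x"
| bot_lam: "Bot \<sqsubseteq> Lam M"
| le_lam: "M \<sqsubseteq> M' \<Longrightarrow> Lam M \<sqsubseteq> Lam M'"
| le_appL: "M \<sqsubseteq> M' \<Longrightarrow> App M N \<sqsubseteq> App M' N"
| le_appR: "N \<sqsubseteq> N' \<Longrightarrow> App M N \<sqsubseteq> App M N'"

text \<open>Approximants: A ::= B | C; B ::= x | \<lambda>x.A | Bot | x B A1..Ak;
  C ::= (\<lambda>x.A)(y B A1..Ak).  Iterated application x B A1 .. Ak is
  foldl App (App (Var x) B) [A1,..,Ak].\<close>

inductive is_A :: "trm \<Rightarrow> bool" and is_B :: "trm \<Rightarrow> bool" where
  A_B: "is_B t \<Longrightarrow> is_A t"
| A_C: "is_A a \<Longrightarrow> is_B b \<Longrightarrow> (\<forall>a'\<in>set as. is_A a') \<Longrightarrow>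
        is_A (App (Lam a) (foldl App (App (Var y) b) as))"
| B_var: "is_B (Var x)"
| B_lam: "is_A a \<Longrightarrow> is_B (Lam a)"
| B_bot: "is_B Bot"
| B_app: "is_B b \<Longrightarrow> (\<forall>a'\<in>set as. is_A a') \<Longrightarrow> is_B (foldl App (App (Var x) b) as)"

end

theory Submission
  imports Defs
begin

fun le' :: "trm \<Rightarrow> trm \<Rightarrow> bool" where
  "le' Bot t = (t = Bot \<or> is_value t)"
| "le' (Var i) t = (t = Var i)"
| "le' (Lam s) t = (case t of Lam s' \<Rightarrow> le' s s' | _ \<Rightarrow> False)"
| "le' (App s1 s2) t = (case t of App t1 t2 \<Rightarrow> le' s1 t1 \<and> le' s2 t2 | _ \<Rightarrow> False)"

lemma le'_refl: "le' t t"
  by (induction t) auto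

lemma le'_trans: "le' a b \<Longrightarrow> le' b c \<Longrightarrow> le' a c"
proof (induction a arbitrary: b c)
  case (Var x)
  then show ?case by auto
next
  case (Lam a)
  then show ?case by (cases b; cases c; auto)
next
  case (App a1 a2)
  then show ?case by (cases b; cases c; auto)
next
  case Bot
  then show ?case by (cases b; cases c; auto)
qed

lemma le_imp_le': "a \<sqsubseteq> b \<Longrightarrow> le' a b"
  by (induction rule: approx_le.induct) (auto simp: le'_refl intro: le'_trans)

lemma is_lam_lt: "Bot \<sqsubseteq> t \<Longrightarrow> is_value t \<or> t = Bot \<Longrightarrow> True" by simp

lemma le'_imp_le: "le' a b \<Longrightarrow> a \<sqsubseteq> b"
proof (induction a arbitrary: b)
  case (Var x)
  then show ?case by (auto intro: le_refl)
next
  case (Lam a)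
  then show ?case by (cases b; auto intro: le_lam)
next
  case (App a1 a2)
  then show ?case
    apply (cases b; simp)
    subgoal for b1 b2 using le_trans[OF le_appL[of a1 b1 a2] le_appR[of a2 b2 b1]] by blast
    done
next
  case Bot
  then show ?case
    by (cases b; auto intro: le_refl bot_var bot_lam)
qed

fun is_lam :: "trm \<Rightarrow> bool" where
  "is_lam (Lam t) = True"
| "is_lam _ = False"

fun good :: "trm \<Rightarrow> bool" where
  "good (Var i) = True"
| "good Bot = True"
| "good (Lam t) = good t"
| "good (App s t) = (good s \<and> good t \<and> s \<noteq> Bot \<and> (\<forall>X Y. s = App X Y \<longrightarrow> \<not> is_lam X)
     \<and> (is_lam s \<longrightarrow> \<not> is_value t \<and> t \<noteq> Bot)
     \<and> (is_value s \<longrightarrow> (\<forall>Y Z. t = App Y Z \<longrightarrow> \<not> is_lam Y)))"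

lemma foldl_app_shape:
  "\<exists>X Y. foldl App (App (Var x) b) as = App X Y \<and> \<not> is_lam X \<and> X \<noteq> Bot"
proof (induction as rule: rev_induct)
  case Nil
  then show ?case by auto
next
  case (snoc a as)
  then show ?case by auto
qed

lemma good_foldl:
  "good b \<Longrightarrow> (\<forall>Y Z. b = App Y Z \<longrightarrow> \<not> is_lam Y) \<Longrightarrow> \<forall>a\<in>set as. good a \<Longrightarrow> good (foldl App (App (Var x) b) as)"
proof (induction as rule: rev_induct)
  case Nil
  then show ?case by auto
next
  case (snoc a as)
  obtain X Y where "foldl App (App (Var x) b) as = App X Y" "\<not> is_lam X" "X \<noteq> Bot"
    using foldl_app_shape by blast
  then show ?case using snoc by auto
qed

lemma good_A: "is_A t \<Longrightarrow> good t" and good_B: "is_B t \<Longrightarrow> good t \<and> (\<forall>Y Z. t = App Y Z \<longrightarrow> \<not> is_lam Y)"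
proof (induction rule: is_A_is_B.inducts)
  case (A_C a b as y)
  define F where "F = foldl App (App (Var y) b) as"
  have gF: "good F" using A_C good_foldl F_def by auto
  obtain X Y where "F = App X Y" "\<not> is_lam X" "X \<noteq> Bot"
    using foldl_app_shape F_def by blast
  then have "good (App (Lam a) F)" using gF A_C by auto
  then show ?case using F_def by simp
next
  case (B_app b as x)
  obtain X Y where "foldl App (App (Var x) b) as = App X Y" "\<not> is_lam X" "X \<noteq> Bot"
    using foldl_app_shape by blast
  then show ?case using B_app good_foldl by (metis trm.inject(3))
qed auto

lemma le'_value: "le' x V \<Longrightarrow> is_value V \<Longrightarrow> x = Bot \<or> is_value x"
  by (cases x; cases V; auto)

lemma le'_lam: "le' x (Lam M) \<Longrightarrow> x = Bot \<or> is_lam x"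
  by (cases x; auto)

lemma main: "M \<rightarrow>\<^sub>v N \<Longrightarrow> good A \<Longrightarrow> le' A M \<Longrightarrow> le' A N"
proof (induction arbitrary: A rule: red_v.induct)
  case (beta_v V M)
  then show ?case
    apply (cases A; simp)
    subgoal for A1 A2 using le'_lam[of A1 M] le'_value[of A2 V] by auto
    done
next
  case (sigma1 M N P)
  then show ?case
    apply (cases A; simp)
    subgoal for A1 A2 apply (cases A1; simp)
      subgoal for X Y using le'_lam[of X M] by auto
      done
    done
next
  case (sigma3 V M N)
  then show ?case
    apply (cases A; simp)
    subgoal for A1 A2 apply (cases A2; simp)
      subgoal for Y Z using le'_lam[of Y M] le'_value[of A1 V] by auto
      done
    done
next
  case (appL M M' N)
  then show ?case by (cases A; auto)
next
  case (appR N N' M)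
  then show ?case by (cases A; auto)
next
  case (lam M M')
  then show ?case by (cases A; auto)
qed

theorem lemma2p5:
  assumes "bot_free M" and "bot_free N" and "is_A A"
    and "A \<sqsubseteq> M" and "M \<rightarrow>\<^sub>v N"
  shows "A \<sqsubseteq> N"
  using main[OF assms(5) good_A[OF assms(3)] le_imp_le'[OF assms(4)]] le'_imp_le by blast

end
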